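(* Let $M$ be a real symmetric $n\times n$ matrix with induced signed graph $\Gamma=(G,\sigma)$, $G=(V,E)$. Let $\lambda_k$ be the $k$-th eigenvalue of $M$ with eigenfunction $f_k$, and suppose $\lambda_{k-1}<\lambda_k$ (if $k>1$). Then $$\mathfrak{S}(f_k)\ge k+v_l-1-n-z_l+z_r,$$ where $v_l$ is the number of leaves (vertices of degree $1$) of $G$, $z_l=|\{x: d_x=1,\ f_k(x)=0\}|$, and $z_r=|\{x: d_x=1,\ f_k(x)\ne0,\ f_k(x')=0 \text{ for the vertex } x'\sim x\}|$.
   Context: The induced signed graph of a real symmetric $n\times n$ matrix $M$ has vertices $x_1,\dots,x_n$, edge $\{x_i,x_j\}$ iff $i\ne j$ and $M_{ij}\ne0$, sign $\sigma_{x_ix_j}=-M_{ij}/|M_{ij}|$; $d_x$ denotes the degree of $x$. Eigenvalues $\lambda_1\le\cdots\le\lambda_n$ are listed with multiplicity; eigenfunctions are nonzero eigenvectors viewed as functions on $V$. A walk is $y_1,\dots,y_m$ ($m\ge2$) with consecutive vertices adjacent; an S-walk of $f$ is a walk with $f(y_j)\sigma_{y_jy_{j+1}}f(y_{j+1})>0$ for all $j$. $\mathfrak{S}(f)$ is the number of equivalence classes (strong nodal domains) of the relation on $\{x:f(x)\ne0\}$ "$x=y$ or an S-walk connects $x$ and $y$". *)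

theory Defs
  imports "Jordan_Normal_Form.Char_Poly" "HOL-Computational_Algebra.Polynomial_Factorial"
begin

text \<open>Eigenvalues of a real square matrix, listed with multiplicity in increasing order,
  as the roots of the characteristic polynomial. Index i is 1-based.\<close>
definition eig :: "real mat \<Rightarrow> nat \<Rightarrow> real" where
  "eig M i = sorted_list_of_multiset (proots (char_poly M)) ! (i - 1)"

definition adj :: "real mat \<Rightarrow> nat \<Rightarrow> nat \<Rightarrow> bool" where
  "adj M i j \<longleftrightarrow> i < dim_row M \<and> j < dim_row M \<and> i \<noteq> j \<and> M $$ (i, j) \<noteq> 0"

definition sgn_edge :: "real mat \<Rightarrow> nat \<Rightarrow> nat \<Rightarrow> real" where
  "sgn_edge M i j = - M $$ (i, j) / \<bar>M $$ (i, j)\<bar>"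

definition deg :: "real mat \<Rightarrow> nat \<Rightarrow> nat" where
  "deg M x = card {y. adj M x y}"

definition walk :: "real mat \<Rightarrow> nat list \<Rightarrow> bool" where
  "walk M ys \<longleftrightarrow> length ys \<ge> 2 \<and> set ys \<subseteq> {0..<dim_row M} \<and>
     (\<forall>j. Suc j < length ys \<longrightarrow> adj M (ys ! j) (ys ! Suc j))"

definition S_walk :: "real mat \<Rightarrow> real vec \<Rightarrow> nat list \<Rightarrow> bool" where
  "S_walk M f ys \<longleftrightarrow> walk M ys \<and>
     (\<forall>j. Suc j < length ys \<longrightarrow>
        f $ (ys ! j) * sgn_edge M (ys ! j) (ys ! Suc j) * f $ (ys ! Suc j) > 0)"

definition nonzero_set :: "real mat \<Rightarrow> real vec \<Rightarrow> nat set" where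
  "nonzero_set M f = {x. x < dim_row M \<and> f $ x \<noteq> 0}"

definition strong_rel :: "real mat \<Rightarrow> real vec \<Rightarrow> (nat \<times> nat) set" where
  "strong_rel M f = {(x, y). x \<in> nonzero_set M f \<and> y \<in> nonzero_set M f \<and>
      (x = y \<or> (\<exists>ys. S_walk M f ys \<and> hd ys = x \<and> last ys = y))}"

definition strong_nodal_domains :: "real mat \<Rightarrow> real vec \<Rightarrow> nat" where
  "strong_nodal_domains M f = card (nonzero_set M f // strong_rel M f)"

end

theory Submission
  imports Defs "Jordan_Normal_Form.Schur_Decomposition"
begin


lemma real_sym_eigenvalue:
  fixes A :: "real mat"
  assumes A: "A \<in> carrier_mat n n" and sym: "transpose_mat A = A" and n: "n > 0"
  shows "\<exists>e. eigenvalue A e"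
proof -
  define C where "C = map_mat complex_of_real A"
  have C: "C \<in> carrier_mat n n" using A by (simp add: C_def)
  obtain as where cp: "char_poly C = (\<Prod>a\<leftarrow>as. [:-a,1:])" and len: "length as = n"
    using char_poly_factorized[OF C] by blast
  define a where "a = hd as"
  have "as \<noteq> []" using len n by auto
  then have "a \<in> set as" unfolding a_def by simp
  then have "poly (char_poly C) a = 0" unfolding cp poly_prod_list
    by (induct as) (auto)
  then have "eigenvalue C a" using eigenvalue_root_char_poly[OF C] by simp
  then obtain z where ev: "eigenvector C z a" using find_eigenvector[OF C] by blast
  then have z: "z \<in> carrier_vec n" and z0: "z \<noteq> 0\<^sub>v n" and Cz: "C *\<^sub>v z = a \<cdot>\<^sub>v z"
    using C unfolding eigenvector_def by auto
  have Aij: "\<And>i j. i < n \<Longrightarrow> j < n \<Longrightarrow> A $$ (j, i) = A $$ (i, j)"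
    using sym A by (metis carrier_matD(1) carrier_matD(2) index_transpose_mat(1))
  have Czi: "(C *\<^sub>v z) $ i = (\<Sum>j<n. complex_of_real (A $$ (i,j)) * z $ j)" if "i < n" for i
    using that A z unfolding C_def by (auto simp: scalar_prod_def lessThan_atLeast0)
  define s where "s = (\<Sum>i<n. cnj (z $ i) * (C *\<^sub>v z) $ i)"
  define N where "N = (\<Sum>i<n. (cmod (z $ i))^2)"
  have s1: "s = a * complex_of_real N"
  proof -
    have "s = (\<Sum>i<n. a * (cnj (z $ i) * z $ i))"
      unfolding s_def using Cz z by (intro sum.cong) auto
    also have "\<dots> = a * (\<Sum>i<n. complex_of_real ((cmod (z $ i))^2))"
      unfolding sum_distrib_left by (intro sum.cong refl) (simp only: complex_norm_square mult.commute)
    finally show ?thesis unfolding N_def by simp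
  qed
  have s2: "cnj s = s"
  proof -
    have "cnj s = (\<Sum>i<n. \<Sum>j<n. z $ i * (complex_of_real (A $$ (i,j)) * cnj (z $ j)))"
      unfolding s_def by (simp add: Czi sum_distrib_left)
    also have "\<dots> = (\<Sum>j<n. \<Sum>i<n. z $ i * (complex_of_real (A $$ (i,j)) * cnj (z $ j)))"
      by (rule sum.swap)
    also have "\<dots> = (\<Sum>j<n. \<Sum>i<n. cnj (z $ j) * (complex_of_real (A $$ (j,i)) * z $ i))"
      by (intro sum.cong refl) (simp add: Aij)
    also have "\<dots> = s" unfolding s_def by (simp add: Czi sum_distrib_left)
    finally show ?thesis .
  qed
  have "N > 0"
  proof -
    obtain i where i: "i < n" "z $ i \<noteq> 0" using z z0 by (metis vec_eq_iff carrier_vecD index_zero_vec(1) index_zero_vec(2))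
    have "(cmod (z $ i))^2 \<le> N" unfolding N_def
      by (rule member_le_sum) (use i in auto)
    moreover have "(cmod (z $ i))^2 > 0" using i by simp
    ultimately show ?thesis by linarith
  qed
  have "cnj a = a" using s1 s2 \<open>N > 0\<close> by simp
  then have aR: "a = complex_of_real (Re a)" by (metis Reals_cnj_iff complex_is_Real_iff of_real_Re)
  have "poly (char_poly C) a = complex_of_real (poly (char_poly A) (Re a))"
    unfolding C_def of_real_hom.char_poly_hom[OF A] 
    by (subst aR) (simp only: of_real_hom.poly_map_poly)
  then have "poly (char_poly A) (Re a) = 0" using \<open>poly (char_poly C) a = 0\<close> by simp
  then show ?thesis using eigenvalue_root_char_poly[OF A] by blast
qed

lemma real_conjugate_vec[simp]: "conjugate (v :: real vec) = v"
  by (intro eq_vecI) (auto simp: conjugate_vec_def)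

lemma real_self_scalar_nonneg: "(v :: real vec) \<bullet> v \<ge> 0"
  unfolding scalar_prod_def by (intro sum_nonneg) auto

lemma orthonormal_completion:
  fixes v :: "real vec"
  assumes v: "v \<in> carrier_vec n" and v1: "v \<bullet> v = 1"
  shows "\<exists>W \<in> carrier_mat n n. transpose_mat W * W = 1\<^sub>m n \<and> col W 0 = v"
proof -
  have v0: "v \<noteq> 0\<^sub>v n" using v1 v by auto
  have n: "n > 0" using v v1 by (cases n) (auto simp: scalar_prod_def)
  interpret cof_vec_space n "TYPE(real)" .
  define b where "b = basis_completion v"
  note bc = basis_completion[OF v v0, folded b_def]
  from bc(6,7) n obtain vs where bv: "b = v # vs" by (cases b) auto
  define ws where "ws = gram_schmidt n b"
  note gs = gram_schmidt_result[OF bc(2) bc(4) bc(5) ws_def]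
  have hdws: "hd ws = v" unfolding ws_def bv using v by simp
  have lenws: "length ws = n" using gs(4) bc(6) by simp
  have wsc: "\<And>i. i < n \<Longrightarrow> ws ! i \<in> carrier_vec n" using gs(3) lenws by auto
  have orth: "\<And>i j. i < n \<Longrightarrow> j < n \<Longrightarrow> ws ! i \<bullet> ws ! j = 0 \<longleftrightarrow> i \<noteq> j"
    using corthogonalD[OF gs(2)] lenws by auto
  have pos: "\<And>i. i < n \<Longrightarrow> ws ! i \<bullet> ws ! i > 0"
    using orth real_self_scalar_nonneg by (metis order_less_le)
  define ws' where "ws' = map (\<lambda>w. (1 / sqrt (w \<bullet> w)) \<cdot>\<^sub>v w) ws"
  have lenws': "length ws' = n" unfolding ws'_def using lenws by simp
  have ws'i: "ws' ! i = (1 / sqrt (ws ! i \<bullet> ws ! i)) \<cdot>\<^sub>v ws ! i" if "i < n" for i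
    unfolding ws'_def using that lenws by simp
  have ws'c: "\<And>i. i < n \<Longrightarrow> ws' ! i \<in> carrier_vec n" using ws'i wsc by simp
  have on: "ws' ! i \<bullet> ws' ! j = (if i = j then 1 else 0)" if ij: "i < n" "j < n" for i j
  proof -
    have "ws' ! i \<bullet> ws' ! j = (1 / sqrt (ws ! i \<bullet> ws ! i)) * (1 / sqrt (ws ! j \<bullet> ws ! j)) * (ws ! i \<bullet> ws ! j)"
      unfolding ws'i[OF ij(1)] ws'i[OF ij(2)] using wsc[OF ij(1)] wsc[OF ij(2)]
      by (simp add: smult_scalar_prod_distrib scalar_prod_smult_distrib)
    then show ?thesis using orth[OF ij] pos[OF ij(1)] 
      by (auto simp: real_sqrt_mult[symmetric] simp del: real_sqrt_mult)
  qed
  define W where "W = mat_of_cols n ws'"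
  have W: "W \<in> carrier_mat n n" unfolding W_def using mat_of_cols_carrier(1)[of n ws'] lenws' by simp
  have colW: "\<And>i. i < n \<Longrightarrow> col W i = ws' ! i"
    unfolding W_def using lenws' ws'c by (simp add: col_mat_of_cols)
  have "transpose_mat W * W = 1\<^sub>m n"
    by (rule eq_matI) (use W colW on in auto)
  moreover have "col W 0 = v"
  proof -
    have "ws ! 0 = v" using hdws lenws n by (metis hd_conv_nth length_0_conv not_gr0)
    then show ?thesis using colW[OF n] ws'i[OF n] v1 by simp
  qed
  ultimately show ?thesis using W by blast
qed

lemma orth_pres:
  fixes W :: "real mat"
  assumes W: "W \<in> carrier_mat n n" and WW: "transpose_mat W * W = 1\<^sub>m n"
    and x: "x \<in> carrier_vec n" and y: "y \<in> carrier_vec n"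
  shows "(W *\<^sub>v x) \<bullet> (W *\<^sub>v y) = x \<bullet> y"
proof -
  have Wt: "transpose_mat W \<in> carrier_mat n n" using W by simp
  have "(W *\<^sub>v x) \<bullet> (W *\<^sub>v y) = x \<bullet> (transpose_mat W *\<^sub>v (W *\<^sub>v y))"
    using transpose_vec_mult_scalar[OF Wt, of "W *\<^sub>v y" x] W x y by simp
  also have "transpose_mat W *\<^sub>v (W *\<^sub>v y) = y"
    using assoc_mult_mat_vec[OF Wt W y, symmetric] WW y by simp
  finally show ?thesis .
qed

definition ext0 :: "nat \<Rightarrow> real vec \<Rightarrow> real vec" where
  "ext0 n y = vec (Suc n) (\<lambda>i. if i = 0 then 0 else y $ (i - 1))"

lemma sum_Suc_split: "(\<Sum>i\<in>{0..<Suc m}. f i) = f 0 + (\<Sum>i\<in>{0..<m}. f (Suc i))"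
  by (simp only: lessThan_atLeast0[symmetric] sum.lessThan_Suc_shift)

lemma ext0_carrier[simp]: "ext0 m y \<in> carrier_vec (Suc m)"
  by (simp add: ext0_def)

lemma ext0_scalar: "y \<in> carrier_vec m \<Longrightarrow> z \<in> carrier_vec m \<Longrightarrow> ext0 m y \<bullet> ext0 m z = y \<bullet> z"
  by (simp add: ext0_def scalar_prod_def sum_Suc_split del: sum.op_ivl_Suc)

lemma unit_ext0_scalar: "unit_vec (Suc m) 0 \<bullet> ext0 m z = 0"
  by (simp add: ext0_def scalar_prod_def sum_Suc_split del: sum.op_ivl_Suc)

lemma ext0_unit_scalar: "ext0 m z \<bullet> unit_vec (Suc m) 0 = 0"
  by (simp add: ext0_def scalar_prod_def sum_Suc_split del: sum.op_ivl_Suc)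

lemma spectral:
  fixes A :: "real mat"
  assumes "A \<in> carrier_mat n n" "transpose_mat A = A"
  shows "\<exists>vs \<mu>. (\<forall>i<n. vs i \<in> carrier_vec n \<and> A *\<^sub>v vs i = \<mu> i \<cdot>\<^sub>v vs i) \<and>
      (\<forall>i<n. \<forall>j<n. vs i \<bullet> vs j = (if i = j then 1 else 0))"
  using assms
proof (induction n arbitrary: A)
  case 0
  then show ?case by auto
next
  case (Suc m)
  let ?n = "Suc m"
  have A: "A \<in> carrier_mat ?n ?n" and sym: "transpose_mat A = A" using Suc.prems by auto
  obtain e where "eigenvalue A e" using real_sym_eigenvalue[OF A sym] by auto
  then have ev: "eigenvector A (find_eigenvector A e) e" using find_eigenvector[OF A] by blast
  define v0 where "v0 = find_eigenvector A e"
  have v0: "v0 \<in> carrier_vec ?n" "v0 \<noteq> 0\<^sub>v ?n" "A *\<^sub>v v0 = e \<cdot>\<^sub>v v0"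
    using ev A unfolding v0_def eigenvector_def by auto
  have v0pos: "v0 \<bullet> v0 > 0"
  proof -
    have "v0 \<bullet> v0 \<noteq> 0" using v0(1,2) by (metis carrier_vecD conjugate_square_eq_0_vec real_conjugate_vec)
    then show ?thesis using real_self_scalar_nonneg by (metis order_less_le)
  qed
  define v where "v = (1 / sqrt (v0 \<bullet> v0)) \<cdot>\<^sub>v v0"
  have v: "v \<in> carrier_vec ?n" using v0 by (simp add: v_def)
  have v1: "v \<bullet> v = 1" using v0pos v0(1)
    by (simp add: v_def smult_scalar_prod_distrib scalar_prod_smult_distrib real_sqrt_mult[symmetric] del: real_sqrt_mult)
  have Av: "A *\<^sub>v v = e \<cdot>\<^sub>v v" using v0 A by (simp add: v_def mult_mat_vec smult_smult_assoc mult.commute)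
  obtain W where W: "W \<in> carrier_mat ?n ?n" and WW: "transpose_mat W * W = 1\<^sub>m ?n" and Wv: "col W 0 = v"
    using orthonormal_completion[OF v v1] by blast
  have Wt: "transpose_mat W \<in> carrier_mat ?n ?n" using W by simp
  have WW': "W * transpose_mat W = 1\<^sub>m ?n" using mat_mult_left_right_inverse[OF Wt W WW] .
  define A' where "A' = transpose_mat W * A * W"
  have A': "A' \<in> carrier_mat ?n ?n" unfolding A'_def using W A by simp
  have symA': "transpose_mat A' = A'"
    unfolding A'_def using W A sym
    by (simp add: transpose_mult[of _ ?n ?n _ ?n] assoc_mult_mat[of _ ?n ?n _ ?n _ ?n])
  have AW: "A * W = W * A'"
  proof -
    have "W * A' = (W * transpose_mat W) * (A * W)" unfolding A'_def
      using W A by (simp add: assoc_mult_mat[of _ ?n ?n _ ?n _ ?n])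
    then show ?thesis using WW' A W by simp
  qed
  have A'col0: "A' $$ (i, 0) = (if i = 0 then e else 0)" if i: "i < ?n" for i
  proof -
    have "A' $$ (i, 0) = row (transpose_mat W) i \<bullet> col (A * W) 0"
      unfolding A'_def using W A i by (simp add: assoc_mult_mat[of _ ?n ?n _ ?n _ ?n])
    also have "col (A * W) 0 = e \<cdot>\<^sub>v col W 0" using col_mult2[OF A W, of 0] Wv Av by simp
    also have "row (transpose_mat W) i = col W i" using W i by (simp add: row_transpose)
    also have "col W i \<bullet> (e \<cdot>\<^sub>v col W 0) = e * (transpose_mat W * W) $$ (i, 0)"
      using W i by (simp add: scalar_prod_smult_distrib)
    finally show ?thesis using WW i by simp
  qed
  have A'row0: "A' $$ (0, j) = (if j = 0 then e else 0)" if j: "j < ?n" for j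
    using A'col0[OF j] symA' A' j by (metis carrier_matD index_transpose_mat(1) zero_less_Suc)
  define A3 where "A3 = mat m m (\<lambda>(i,j). A' $$ (Suc i, Suc j))"
  have A3: "A3 \<in> carrier_mat m m" unfolding A3_def by simp
  have symA3: "transpose_mat A3 = A3"
    unfolding A3_def using symA' A' 
    by (intro eq_matI) (auto, metis Suc_less_eq carrier_matD index_transpose_mat(1))
  obtain vs3 \<mu>3 where vs3: "\<And>i. i < m \<Longrightarrow> vs3 i \<in> carrier_vec m \<and> A3 *\<^sub>v vs3 i = \<mu>3 i \<cdot>\<^sub>v vs3 i"
    and on3: "\<And>i j. i < m \<Longrightarrow> j < m \<Longrightarrow> vs3 i \<bullet> vs3 j = (if i = j then 1 else 0)"
    using Suc.IH[OF A3 symA3] by blast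
  have A'ext: "A' *\<^sub>v ext0 m y = ext0 m (A3 *\<^sub>v y)" if y: "y \<in> carrier_vec m" for y
  proof (rule eq_vecI)
    show "dim_vec (A' *\<^sub>v ext0 m y) = dim_vec (ext0 m (A3 *\<^sub>v y))" using A' by (simp add: ext0_def)
    fix i assume "i < dim_vec (ext0 m (A3 *\<^sub>v y))"
    then have i: "i < ?n" by (simp add: ext0_def)
    show "(A' *\<^sub>v ext0 m y) $ i = ext0 m (A3 *\<^sub>v y) $ i"
    proof (cases i)
      case 0
      then show ?thesis using A' i A'row0 y by (simp add: ext0_def scalar_prod_def sum_Suc_split row_def del: sum.op_ivl_Suc)
    next
      case (Suc i')
      then show ?thesis using A' i y A3 by (simp add: ext0_def scalar_prod_def sum_Suc_split row_def A3_def del: sum.op_ivl_Suc)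
    qed
  qed
  have A'e0: "A' *\<^sub>v unit_vec ?n 0 = e \<cdot>\<^sub>v unit_vec ?n 0"
  proof (rule eq_vecI)
    fix i assume "i < dim_vec (e \<cdot>\<^sub>v unit_vec ?n 0)"
    then have i: "i < ?n" by simp
    show "(A' *\<^sub>v unit_vec ?n 0) $ i = (e \<cdot>\<^sub>v unit_vec ?n 0) $ i"
      using A' i A'col0[OF i] by (simp add: scalar_prod_def sum_Suc_split row_def del: sum.op_ivl_Suc)
  qed (use A' in simp)
  define z where "z i = (if i = 0 then unit_vec ?n 0 else ext0 m (vs3 (i - 1)))" for i
  define \<mu> where "\<mu> i = (if i = 0 then e else \<mu>3 (i - 1))" for i
  have zc: "z i \<in> carrier_vec ?n" for i by (simp add: z_def)
  have Az: "A' *\<^sub>v z i = \<mu> i \<cdot>\<^sub>v z i" if "i < ?n" for i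
  proof (cases i)
    case 0 then show ?thesis using A'e0 by (simp add: z_def \<mu>_def)
  next
    case (Suc i')
    then have "i' < m" using that by simp
    then show ?thesis using vs3[of i'] A'ext[of "vs3 i'"] Suc by (simp add: z_def \<mu>_def ext0_def) (rule eq_vecI; auto)
  qed
  have zon: "z i \<bullet> z j = (if i = j then 1 else 0)" if "i < ?n" "j < ?n" for i j
  proof (cases i; cases j)
    fix i' j' assume "i = Suc i'" "j = Suc j'"
    then show ?thesis using that on3[of i' j'] vs3[of i'] vs3[of j'] by (simp add: z_def ext0_scalar)
  qed (auto simp: z_def unit_ext0_scalar ext0_unit_scalar)
  define vs where "vs i = W *\<^sub>v z i" for i
  show ?case
  proof (intro exI[of _ vs] exI[of _ \<mu>] conjI allI impI)
    fix i assume i: "i < ?n"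
    show "vs i \<in> carrier_vec ?n" unfolding vs_def by (rule mult_mat_vec_carrier[OF W zc])
    have "A *\<^sub>v vs i = (A * W) *\<^sub>v z i" unfolding vs_def using A W zc by (simp add: assoc_mult_mat_vec)
    also have "\<dots> = W *\<^sub>v (A' *\<^sub>v z i)" unfolding AW using W A' zc by (simp add: assoc_mult_mat_vec)
    also have "\<dots> = \<mu> i \<cdot>\<^sub>v vs i" unfolding Az[OF i] vs_def using W zc by (simp add: mult_mat_vec)
    finally show "A *\<^sub>v vs i = \<mu> i \<cdot>\<^sub>v vs i" .
  next
    fix i j assume "i < ?n" "j < ?n"
    then show "vs i \<bullet> vs j = (if i = j then 1 else 0)"
      unfolding vs_def using orth_pres[OF W WW zc zc] zon by simp
  qed
qed

lemma proots_linear_prod: "proots (\<Prod>a\<leftarrow>xs. [:- a, 1:]) = mset (xs :: real list)"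
proof (induction xs)
  case Nil then show ?case by simp
next
  case (Cons a xs)
  have nz: "(\<Prod>a\<leftarrow>xs. [:- a, 1:]) \<noteq> (0 :: real poly)"
    by (subst prod_list_zero_iff) auto
  have h: "proots [:- a, 1:] = {#a#}" using proots_linear_factor[of "- a"] by simp
  have "proots (\<Prod>a\<leftarrow>a#xs. [:- a, 1:]) = proots ([:- a, 1:] * (\<Prod>a\<leftarrow>xs. [:- a, 1:]))" by simp
  also have "\<dots> = proots [:- a, 1:] + proots (\<Prod>a\<leftarrow>xs. [:- a, 1:])"
    by (rule proots_mult) (use nz in auto)
  finally show ?case using Cons h by simp
qed

lemma spectral_charpoly:
  fixes A :: "real mat"
  assumes A: "A \<in> carrier_mat n n" and sym: "transpose_mat A = A"
  shows "\<exists>Om \<mu>. Om \<in> carrier_mat n n \<and> transpose_mat Om * Om = 1\<^sub>m n \<and>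
      A * Om = Om * mat n n (\<lambda>(i,j). if i = j then \<mu> i else 0) \<and>
      proots (char_poly A) = mset (map \<mu> [0..<n])"
proof -
  obtain vs \<mu> where ev: "\<And>i. i<n \<Longrightarrow> vs i \<in> carrier_vec n \<and> A *\<^sub>v vs i = \<mu> i \<cdot>\<^sub>v vs i"
    and on: "\<And>i j. i<n \<Longrightarrow> j<n \<Longrightarrow> vs i \<bullet> vs j = (if i = j then 1 else 0)"
    using spectral[OF A sym] by blast
  define Om where "Om = mat n n (\<lambda>(r,c). vs c $ r)"
  define D where "D = mat n n (\<lambda>(i,j). if i = j then \<mu> i else 0)"
  have Om: "Om \<in> carrier_mat n n" and D: "D \<in> carrier_mat n n" and Ot: "transpose_mat Om \<in> carrier_mat n n"
    unfolding Om_def D_def by auto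
  have colO: "col Om j = vs j" if "j < n" for j
    using ev[OF that] that unfolding Om_def by (intro eq_vecI) auto
  have OtO: "transpose_mat Om * Om = 1\<^sub>m n"
    by (rule eq_matI) (use Om colO on in auto)
  have OOt: "Om * transpose_mat Om = 1\<^sub>m n" using mat_mult_left_right_inverse[OF Ot Om OtO] .
  have AO: "A * Om = Om * D"
  proof (rule eq_matI)
    fix i j assume ij: "i < dim_row (Om * D)" "j < dim_col (Om * D)"
    then have i: "i < n" and j: "j < n" using Om D by auto
    have "(A * Om) $$ (i, j) = (A *\<^sub>v vs j) $ i" using A Om i j colO[OF j] by simp
    also have "\<dots> = \<mu> j * vs j $ i" using ev[OF j] i by (metis carrier_vecD index_smult_vec(1))
    finally have 1: "(A * Om) $$ (i, j) = \<mu> j * vs j $ i" .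
    have "(Om * D) $$ (i, j) = (\<Sum>k\<in>{0..<n}. vs k $ i * (if k = j then \<mu> k else 0))"
      using Om D i j by (simp add: scalar_prod_def Om_def D_def)
    also have "\<dots> = vs j $ i * \<mu> j" using j by (simp add: if_distrib cong: if_cong)
    finally have 2: "(Om * D) $$ (i, j) = vs j $ i * \<mu> j" .
    show "(A * Om) $$ (i, j) = (Om * D) $$ (i, j)" using 1 2 by simp
  qed (use A Om D in auto)
  have "A = Om * D * transpose_mat Om"
  proof -
    have "A = A * (Om * transpose_mat Om)" using A OOt by simp
    also have "\<dots> = (A * Om) * transpose_mat Om" using A Om Ot by (simp add: assoc_mult_mat)
    finally show ?thesis unfolding AO .
  qed
  then have "similar_mat A D" unfolding similar_mat_def similar_mat_wit_def
    using A Om D Ot OOt OtO by (intro exI[of _ Om] exI[of _ "transpose_mat Om"]) auto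
  then have "char_poly A = char_poly D" by (rule char_poly_similar)
  also have "\<dots> = (\<Prod>a\<leftarrow>diag_mat D. [:- a, 1:])"
    by (rule char_poly_upper_triangular[OF D]) (auto simp: upper_triangular_def D_def)
  also have "diag_mat D = map \<mu> [0..<n]" unfolding diag_mat_def D_def by (intro map_cong) auto
  finally have "proots (char_poly A) = mset (map \<mu> [0..<n])" by (simp only: proots_linear_prod)
  then show ?thesis using Om OtO AO unfolding D_def by blast
qed

lemma sum_delta_mult: "finite S \<Longrightarrow> i \<in> S \<Longrightarrow> (\<Sum>k\<in>S. (if i = k then a else 0) * f k) = a * (f i :: real)"
proof -
  assume "finite S" "i \<in> S"
  have "(\<Sum>k\<in>S. (if i = k then a else 0) * f k) = (\<Sum>k\<in>S. if i = k then a * f k else 0)"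
    by (rule sum.cong) auto
  then show ?thesis using \<open>finite S\<close> \<open>i \<in> S\<close> by simp
qed

lemma quad_lemma:
  fixes A Om :: "real mat" and lam :: real
  assumes A: "A \<in> carrier_mat n n" and Om: "Om \<in> carrier_mat n n"
    and OtO: "transpose_mat Om * Om = 1\<^sub>m n"
    and AO: "A * Om = Om * mat n n (\<lambda>(i,j). if i = j then \<mu> i else 0)"
    and I: "I \<subseteq> {0..<n}" and diag: "\<forall>x\<in>I. A $$ (x,x) \<ge> lam"
    and off: "\<forall>x\<in>I. \<forall>y\<in>I. x \<noteq> y \<longrightarrow> A $$ (x,y) = 0"
    and c: "c \<in> carrier_vec n"
    and supp: "\<forall>i<n. i \<notin> I \<longrightarrow> (Om *\<^sub>v c) $ i = 0"
  shows "(\<Sum>j<n. (c $ j)^2 * (\<mu> j - lam)) \<ge> 0"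
proof -
  define D where "D = mat n n (\<lambda>(i,j). if i = j then \<mu> i else (0::real))"
  have D: "D \<in> carrier_mat n n" unfolding D_def by simp
  define u where "u = Om *\<^sub>v c"
  have u: "u \<in> carrier_vec n" unfolding u_def using Om c by simp
  have Dc: "D *\<^sub>v c = vec n (\<lambda>j. \<mu> j * c $ j)"
    by (rule eq_vecI) (use c in \<open>auto simp: D_def scalar_prod_def sum_delta_mult\<close>)
  have Au: "A *\<^sub>v u = Om *\<^sub>v (D *\<^sub>v c)"
    unfolding u_def using A Om D c AO[folded D_def]
    by (metis assoc_mult_mat_vec)
  have "u \<bullet> (A *\<^sub>v u) = c \<bullet> (D *\<^sub>v c)"
    unfolding Au unfolding u_def using orth_pres[OF Om OtO c, of "D *\<^sub>v c"] D c by simp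
  also have "\<dots> = (\<Sum>j<n. (c $ j)^2 * \<mu> j)"
    unfolding Dc using c by (simp add: scalar_prod_def lessThan_atLeast0 power2_eq_square mult_ac)
  finally have uAu: "u \<bullet> (A *\<^sub>v u) = (\<Sum>j<n. (c $ j)^2 * \<mu> j)" .
  have "u \<bullet> u = c \<bullet> c" unfolding u_def using orth_pres[OF Om OtO c c] .
  also have "\<dots> = (\<Sum>j<n. (c $ j)^2)" using c by (simp add: scalar_prod_def lessThan_atLeast0 power2_eq_square)
  finally have uu: "u \<bullet> u = (\<Sum>j<n. (c $ j)^2)" .
  have suppu: "\<And>i. i < n \<Longrightarrow> i \<notin> I \<Longrightarrow> u $ i = 0" using supp unfolding u_def by blast
  have Aui: "(A *\<^sub>v u) $ i = A $$ (i,i) * u $ i" if i: "i \<in> I" for i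
  proof -
    have iN: "i < n" using I i by auto
    have "(A *\<^sub>v u) $ i = (\<Sum>k\<in>{0..<n}. A $$ (i,k) * u $ k)"
      using A u iN by (simp add: scalar_prod_def row_def)
    also have "\<dots> = (\<Sum>k\<in>{0..<n}. if k = i then A $$ (i,i) * u $ i else 0)"
    proof (intro sum.cong refl)
      fix k assume k: "k \<in> {0..<n}"
      show "A $$ (i,k) * u $ k = (if k = i then A $$ (i,i) * u $ i else 0)"
        using off i suppu[of k] k by (cases "k \<in> I") auto
    qed
    also have "\<dots> = A $$ (i,i) * u $ i" using iN by simp
    finally show ?thesis .
  qed
  have "u \<bullet> (A *\<^sub>v u) = (\<Sum>i\<in>{0..<n}. u $ i * (A *\<^sub>v u) $ i)"
    using A u by (simp add: scalar_prod_def)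
  also have "\<dots> = (\<Sum>i\<in>{0..<n}. if i \<in> I then A $$ (i,i) * (u $ i)^2 else 0)"
    by (intro sum.cong refl) (auto simp: Aui suppu power2_eq_square)
  also have "\<dots> \<ge> (\<Sum>i\<in>{0..<n}. lam * (u $ i)^2)"
    by (intro sum_mono) (auto simp: suppu diag mult_right_mono)
  finally have "u \<bullet> (A *\<^sub>v u) \<ge> lam * (u \<bullet> u)"
    using u by (simp add: scalar_prod_def sum_distrib_left power2_eq_square)
  then have "(\<Sum>j<n. (c $ j)^2 * \<mu> j) - (\<Sum>j<n. lam * (c $ j)^2) \<ge> 0"
    unfolding uAu uu sum_distrib_left by simp
  then show ?thesis by (simp add: sum_subtractf[symmetric] algebra_simps)
qed

lemma count_lemma:
  fixes A Om :: "real mat" and lam :: real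
  assumes A: "A \<in> carrier_mat n n" and Om: "Om \<in> carrier_mat n n"
    and OtO: "transpose_mat Om * Om = 1\<^sub>m n"
    and AO: "A * Om = Om * mat n n (\<lambda>(i,j). if i = j then \<mu> i else 0)"
    and I: "I \<subseteq> {0..<n}" and diag: "\<forall>x\<in>I. A $$ (x,x) \<ge> lam"
    and off: "\<forall>x\<in>I. \<forall>y\<in>I. x \<noteq> y \<longrightarrow> A $$ (x,y) = 0"
  shows "card {j. j < n \<and> \<mu> j < lam} + card I \<le> n"
proof -
  define J where "J = {j. j < n \<and> \<mu> j < lam}"
  define vs where "vs j = col Om j" for j
  define e :: "nat \<Rightarrow> real vec" where "e x = unit_vec n x" for x
  have vsc: "vs j \<in> carrier_vec n" for j unfolding vs_def using Om by (metis carrier_matD(1) carrier_vecI col_dim)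
  have vsij: "vs i \<bullet> vs j = (if i = j then 1 else 0)" if "i < n" "j < n" for i j
  proof -
    have "vs i \<bullet> vs j = (transpose_mat Om * Om) $$ (i, j)" unfolding vs_def using Om that by simp
    then show ?thesis using OtO that by simp
  qed
  have Omc: "(Om *\<^sub>v c) $ i = (\<Sum>j\<in>{0..<n}. c $ j * vs j $ i)" if "i < n" "c \<in> carrier_vec n" for c i
    using that Om by (simp add: scalar_prod_def vs_def mult_ac)
  have finJ: "finite J" unfolding J_def by simp
  have finI: "finite I" using finite_subset[OF I] by simp
  have injvs: "inj_on vs J"
  proof (rule inj_onI)
    fix i j assume "i \<in> J" "j \<in> J" "vs i = vs j"
    then show "i = j" using vsij[of i i] vsij[of i j] unfolding J_def by (auto split: if_splits)
  qed
  have inje: "inj_on e I" unfolding e_def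
    by (rule inj_onI) (use I in \<open>auto simp: unit_vec_eq\<close>)
  have disj: "vs ` J \<inter> e ` I = {}"
  proof (rule ccontr)
    assume "vs ` J \<inter> e ` I \<noteq> {}"
    then obtain j x where j: "j \<in> J" and x: "x \<in> I" and eq: "vs j = e x" by auto
    have jn: "j < n" using j unfolding J_def by simp
    have "Om *\<^sub>v unit_vec n j = vs j" unfolding vs_def
      by (rule eq_vecI) (use Om jn in \<open>auto simp: scalar_prod_right_unit\<close>)
    then have supp: "\<forall>i<n. i \<notin> I \<longrightarrow> (Om *\<^sub>v unit_vec n j) $ i = 0"
      using eq x unfolding e_def by (auto simp: unit_vec_def)
    have "(\<Sum>k<n. (unit_vec n j $ k)^2 * (\<mu> k - lam)) \<ge> 0"
      by (rule quad_lemma[OF A Om OtO AO I diag off _ supp]) simp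
    also have "(\<Sum>k<n. (unit_vec n j $ k)^2 * (\<mu> k - lam)) = \<mu> j - lam"
    proof -
      have "(\<Sum>k<n. (unit_vec n j $ k)^2 * (\<mu> k - lam)) = (\<Sum>k<n. if k = j then \<mu> k - lam else 0)"
        by (rule sum.cong) (auto simp: unit_vec_def)
      then show ?thesis using jn by simp
    qed
    finally show False using j unfolding J_def by simp
  qed
  interpret vec_space "TYPE(real)" n .
  define S where "S = vs ` J \<union> e ` I"
  have SC: "S \<subseteq> carrier_vec n" unfolding S_def e_def using vsc by auto
  have finS: "finite S" unfolding S_def using finJ finI by simp
  have li: "lin_indpt S"
  proof (rule finite_lin_indpt2[OF finS SC])
    fix a assume lc: "lincomb a S = 0\<^sub>v n"
    have lci: "(\<Sum>j\<in>J. a (vs j) * vs j $ i) + (if i \<in> I then a (e i) else 0) = 0" if i: "i < n" for i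
    proof -
      have "0 = lincomb a S $ i" using lc i by simp
      also have "\<dots> = (\<Sum>x\<in>S. a x * x $ i)" by (rule lincomb_index[OF i SC])
      also have "\<dots> = (\<Sum>x\<in>vs ` J. a x * x $ i) + (\<Sum>x\<in>e ` I. a x * x $ i)"
        unfolding S_def by (rule sum.union_disjoint) (use finJ finI disj in auto)
      also have "(\<Sum>x\<in>vs ` J. a x * x $ i) = (\<Sum>j\<in>J. a (vs j) * vs j $ i)"
        by (rule sum.reindex_cong[OF injvs refl]) simp
      also have "(\<Sum>x\<in>e ` I. a x * x $ i) = (\<Sum>y\<in>I. a (e y) * e y $ i)"
        by (rule sum.reindex_cong[OF inje refl]) simp
      also have "\<dots> = (\<Sum>y\<in>I. if y = i then a (e i) else 0)"
        by (rule sum.cong) (use i I in \<open>auto simp: e_def\<close>)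
      also have "\<dots> = (if i \<in> I then a (e i) else 0)" using finI by simp
      finally show ?thesis by simp
    qed
    define c where "c = vec n (\<lambda>j. if j \<in> J then a (vs j) else 0)"
    have cc: "c \<in> carrier_vec n" unfolding c_def by simp
    have Omci: "(Om *\<^sub>v c) $ i = (\<Sum>j\<in>J. a (vs j) * vs j $ i)" if i: "i < n" for i
    proof -
      have "(Om *\<^sub>v c) $ i = (\<Sum>j\<in>{0..<n}. if j \<in> J then a (vs j) * vs j $ i else 0)"
        unfolding Omc[OF i cc] by (rule sum.cong) (auto simp: c_def)
      also have "\<dots> = (\<Sum>j\<in>{0..<n} \<inter> J. a (vs j) * vs j $ i)"
        by (simp add: sum.inter_restrict)
      also have "{0..<n} \<inter> J = J" unfolding J_def by auto
      finally show ?thesis .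
    qed
    have supp: "\<forall>i<n. i \<notin> I \<longrightarrow> (Om *\<^sub>v c) $ i = 0"
    proof (intro allI impI)
      fix i assume "i < n" "i \<notin> I"
      then show "(Om *\<^sub>v c) $ i = 0" using lci[of i] Omci[of i] by simp
    qed
    have q: "(\<Sum>j<n. (c $ j)^2 * (\<mu> j - lam)) \<ge> 0"
      by (rule quad_lemma[OF A Om OtO AO I diag off cc supp])
    have nonpos: "(c $ j)^2 * (\<mu> j - lam) \<le> 0" if "j \<in> {..<n}" for j
      using that by (cases "j \<in> J") (auto simp: c_def J_def mult_nonneg_nonpos)
    have zero: "(c $ j)^2 * (\<mu> j - lam) = 0" if "j \<in> {..<n}" for j
    proof -
      have "(\<Sum>j<n. - ((c $ j)^2 * (\<mu> j - lam))) = 0"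
        using q nonpos sum_nonpos[of "{..<n}" "\<lambda>j. (c $ j)^2 * (\<mu> j - lam)"]
        by (simp add: sum_negf)
      then have "\<forall>j\<in>{..<n}. - ((c $ j)^2 * (\<mu> j - lam)) = 0"
        by (subst sum_nonneg_eq_0_iff[symmetric]) (use nonpos in auto)
      then show ?thesis using that by auto
    qed
    have aJ: "a (vs j) = 0" if j: "j \<in> J" for j
    proof -
      have jn: "j < n" and "\<mu> j - lam \<noteq> 0" using j unfolding J_def by auto
      then have "(c $ j)^2 = 0" using zero[of j] by simp
      then show ?thesis using j jn by (simp add: c_def)
    qed
    have aI: "a (e i) = 0" if i: "i \<in> I" for i
    proof -
      have "i < n" using i I by auto
      then show ?thesis using lci[of i] aJ i by simp
    qed
    show "\<forall>v\<in>S. a v = 0" unfolding S_def using aJ aI by auto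
  qed
  have "card S \<le> n" using li_le_dim(2)[OF fin_dim SC li] dim_is_n by simp
  moreover have "card S = card J + card I"
    unfolding S_def using card_Un_disjoint[OF _ _ disj] finJ finI card_image[OF injvs] card_image[OF inje]
    by simp
  ultimately show ?thesis unfolding J_def by simp
qed

lemma eig_count:
  fixes A :: "real mat"
  assumes pr: "proots (char_poly A) = mset (map \<mu> [0..<n])" and k: "1 \<le> k" "k \<le> n"
    and gap: "k > 1 \<longrightarrow> eig A (k - 1) < eig A k"
  shows "k - 1 \<le> card {j. j < n \<and> \<mu> j < eig A k}"
proof -
  define xs where "xs = map \<mu> [0..<n]"
  define s where "s = sort xs"
  have eigs: "eig A i = s ! (i - 1)" for i
    unfolding eig_def pr s_def xs_def by (simp only: sorted_list_of_multiset_mset)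
  have lens: "length s = n" unfolding s_def xs_def by simp
  have sorted: "sorted s" unfolding s_def by simp
  define lam where "lam = eig A k"
  have sub: "{j. j < k - 1} \<subseteq> {j. j < length s \<and> s ! j < lam}"
  proof
    fix j assume "j \<in> {j. j < k - 1}"
    then have j: "j < k - 1" by simp
    then have k1: "k > 1" by simp
    have "s ! j \<le> s ! (k - 2)" using sorted j lens k by (intro sorted_nth_mono) auto
    also have "s ! (k - 2) < s ! (k - 1)" using gap k1 unfolding eigs by (simp add: numeral_2_eq_2)
    finally show "j \<in> {j. j < length s \<and> s ! j < lam}" using j lens k unfolding lam_def eigs by simp
  qed
  have "k - 1 \<le> card {j. j < length s \<and> s ! j < lam}"
    using card_mono[OF _ sub] by simp
  also have "\<dots> = length (filter (\<lambda>x. x < lam) s)" by (simp add: length_filter_conv_card)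
  also have "\<dots> = length (filter (\<lambda>x. x < lam) xs)"
  proof -
    have "mset (filter (\<lambda>x. x < lam) s) = mset (filter (\<lambda>x. x < lam) xs)"
      unfolding s_def by simp
    then show ?thesis by (metis size_mset)
  qed
  also have "\<dots> = card {j. j < n \<and> \<mu> j < lam}"
  proof -
    have "length (filter (\<lambda>x. x < lam) xs) = card {i. i < n \<and> xs ! i < lam}"
      by (simp add: length_filter_conv_card xs_def)
    also have "{i. i < n \<and> xs ! i < lam} = {j. j < n \<and> \<mu> j < lam}"
      unfolding xs_def by auto
    finally show ?thesis .
  qed
  finally show ?thesis unfolding lam_def .
qed



definition nb :: "real mat \<Rightarrow> nat \<Rightarrow> nat" where "nb M x = (THE y. adj M x y)"

lemma nb_leaf:
  assumes "deg M x = 1"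
  shows "adj M x (nb M x)" "\<And>y. adj M x y \<Longrightarrow> y = nb M x"
proof -
  obtain y where y: "{y. adj M x y} = {y}" using assms unfolding deg_def by (metis card_1_singletonE)
  then have ex: "\<And>z. adj M x z \<longleftrightarrow> z = y" by blast
  then have "nb M x = y" unfolding nb_def by (intro the_equality) auto
  then show "adj M x (nb M x)" "\<And>z. adj M x z \<Longrightarrow> z = nb M x" using ex by auto
qed

lemma adj_sym:
  assumes "M \<in> carrier_mat n n" "transpose_mat M = M" "adj M x y"
  shows "adj M y x"
  using assms unfolding adj_def by (metis carrier_matD index_transpose_mat(1))

lemma adj_lt: "M \<in> carrier_mat n n \<Longrightarrow> adj M x y \<Longrightarrow> x < n \<and> y < n"
  unfolding adj_def by auto

lemma S_walk_step:
  "S_walk M f ys \<Longrightarrow> Suc j < length ys \<Longrightarrow>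
    adj M (ys ! j) (ys ! Suc j) \<and> f $ (ys ! j) * sgn_edge M (ys ! j) (ys ! Suc j) * f $ (ys ! Suc j) > 0"
  unfolding S_walk_def walk_def by blast

lemma isolated_class:
  assumes leaf: "deg M x = 1"
    and nos: "\<not> (f $ x * sgn_edge M x (nb M x) * f $ (nb M x) > 0)"
    and rel: "(x, y) \<in> strong_rel M f"
  shows "y = x"
proof (rule ccontr)
  assume "y \<noteq> x"
  then obtain ys where ys: "S_walk M f ys" "hd ys = x" using rel unfolding strong_rel_def by auto
  have len: "length ys \<ge> 2" using ys(1) unfolding S_walk_def walk_def by simp
  then have "ys ! 0 = x" using ys(2) by (metis hd_conv_nth list.size(3) not_numeral_le_zero)
  moreover have "adj M (ys ! 0) (ys ! 1) \<and> f $ (ys ! 0) * sgn_edge M (ys ! 0) (ys ! 1) * f $ (ys ! 1) > 0"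
    using S_walk_step[OF ys(1), of 0] len by simp
  ultimately show False using nb_leaf(2)[OF leaf] nos by metis
qed

lemma pair_class:
  assumes lx: "deg M x = 1" and ly: "deg M y = 1" and nx: "nb M x = y" and ny: "nb M y = x"
    and rel: "(x, z) \<in> strong_rel M f"
  shows "z = x \<or> z = y"
proof -
  have "z = x \<or> (\<exists>ys. S_walk M f ys \<and> hd ys = x \<and> last ys = z)" using rel unfolding strong_rel_def by auto
  then show ?thesis
  proof
    assume "\<exists>ys. S_walk M f ys \<and> hd ys = x \<and> last ys = z"
    then obtain ys where ys: "S_walk M f ys" "hd ys = x" "last ys = z" by blast
    have len: "length ys \<ge> 2" using ys(1) unfolding S_walk_def walk_def by simp
    have all: "ys ! j = x \<or> ys ! j = y" if "j < length ys" for j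
      using that
    proof (induction j)
      case 0 then show ?case using ys(2) by (metis hd_conv_nth list.size(3) not_less_zero)
    next
      case (Suc j)
      then have "adj M (ys ! j) (ys ! Suc j)" using S_walk_step[OF ys(1), of j] by simp
      then show ?case using Suc nb_leaf(2)[OF lx] nb_leaf(2)[OF ly] nx ny by auto
    qed
    have "ys \<noteq> []" using len by auto
    then have "last ys = ys ! (length ys - 1)" by (simp add: last_conv_nth)
    then show ?thesis using all[of "length ys - 1"] len ys(3) by simp
  qed simp
qed

lemma leaf_row:
  assumes M: "M \<in> carrier_mat n n" and f: "f \<in> carrier_vec n"
    and ev: "M *\<^sub>v f = lam \<cdot>\<^sub>v f" and leaf: "deg M x = 1"
  shows "M $$ (x, x) * f $ x + M $$ (x, nb M x) * f $ (nb M x) = lam * f $ x"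
proof -
  define y where "y = nb M x"
  have a: "adj M x y" using nb_leaf(1)[OF leaf] unfolding y_def .
  have x: "x < n" and y: "y < n" and xy: "x \<noteq> y" using a M unfolding adj_def by auto
  have z: "M $$ (x, k) = 0" if "k < n" "k \<noteq> x" "k \<noteq> y" for k
    using that nb_leaf(2)[OF leaf, of k] M x unfolding adj_def y_def by auto
  have "lam * f $ x = (M *\<^sub>v f) $ x" using ev x f by simp
  also have "\<dots> = (\<Sum>k\<in>{0..<n}. M $$ (x, k) * f $ k)"
    using M f x by (simp add: scalar_prod_def row_def)
  also have "\<dots> = (\<Sum>k\<in>{0..<n}. (if k = x then M $$ (x, x) * f $ x else 0) + (if k = y then M $$ (x, y) * f $ y else 0))"
    by (rule sum.cong) (use z xy in auto)
  also have "\<dots> = M $$ (x, x) * f $ x + M $$ (x, y) * f $ y"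
    using x y by (simp add: sum.distrib)
  finally show ?thesis unfolding y_def by simp
qed

lemma main_bound:
  fixes M :: "real mat"
  assumes M: "M \<in> carrier_mat n n" and sym: "transpose_mat M = M"
    and k: "1 \<le> k" "k \<le> n" and gap: "k > 1 \<longrightarrow> eig M (k - 1) < eig M k"
    and I: "I \<subseteq> {0..<n}" and diag: "\<forall>x\<in>I. M $$ (x,x) \<ge> eig M k"
    and off: "\<forall>x\<in>I. \<forall>y\<in>I. x \<noteq> y \<longrightarrow> M $$ (x,y) = 0"
  shows "card I + k \<le> n + 1"
proof -
  obtain Om \<mu> where Om: "Om \<in> carrier_mat n n" and OtO: "transpose_mat Om * Om = 1\<^sub>m n"
    and AO: "M * Om = Om * mat n n (\<lambda>(i,j). if i = j then \<mu> i else 0)"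
    and pr: "proots (char_poly M) = mset (map \<mu> [0..<n])"
    using spectral_charpoly[OF M sym] by blast
  have "k - 1 \<le> card {j. j < n \<and> \<mu> j < eig M k}" by (rule eig_count[OF pr k gap])
  moreover have "card {j. j < n \<and> \<mu> j < eig M k} + card I \<le> n"
    by (rule count_lemma[OF M Om OtO AO I diag off])
  ultimately show ?thesis using k by linarith
qed

lemma SC_diag:
  fixes M :: "real mat"
  assumes row: "M $$ (x, x) * f $ x + M $$ (x, y) * f $ y = lam * f $ x"
    and fx: "f $ x \<noteq> 0" and m: "M $$ (x, y) \<noteq> 0"
    and sw: "f $ x * sgn_edge M x y * f $ y > 0"
  shows "M $$ (x, x) > lam"
proof -
  define m where "m = M $$ (x, y)"
  have m0: "m \<noteq> 0" using m unfolding m_def .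
  have "- m * f $ x * f $ y = \<bar>m\<bar> * (f $ x * sgn_edge M x y * f $ y)"
    unfolding sgn_edge_def m_def[symmetric] using m0 by (simp add: field_simps)
  then have p: "- m * f $ x * f $ y > 0" using sw m0 by simp
  have r: "m * f $ y = lam * f $ x - M $$ (x, x) * f $ x" using row unfolding m_def by linarith
  have "(M $$ (x, x) - lam) * (f $ x * f $ x) = - (m * f $ y) * f $ x"
    unfolding r by (simp add: algebra_simps)
  then have "(M $$ (x, x) - lam) * (f $ x * f $ x) = - m * f $ x * f $ y"
    by (simp add: algebra_simps)
  then have q: "(M $$ (x, x) - lam) * (f $ x * f $ x) > 0" using p by simp
  have "f $ x * f $ x > 0" using fx by (simp add: zero_less_mult_iff linorder_neq_iff) blast
  show ?thesis
  proof (rule ccontr)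
    assume "\<not> ?thesis"
    then have "M $$ (x, x) - lam \<le> 0" by simp
    then have "(M $$ (x, x) - lam) * (f $ x * f $ x) \<le> 0"
      using \<open>f $ x * f $ x > 0\<close> by (simp add: mult_nonpos_nonneg)
    then show False using q by simp
  qed
qed

theorem theorem6p10:
  fixes M :: "real mat" and f :: "real vec" and n k :: nat
  assumes "M \<in> carrier_mat n n"
    and "transpose_mat M = M"
    and "1 \<le> k" "k \<le> n"
    and "k > 1 \<longrightarrow> eig M (k - 1) < eig M k"
    and "eigenvector M f (eig M k)"
  shows "int (strong_nodal_domains M f) \<ge>
           int k + int (card {x. x < n \<and> deg M x = 1}) - 1 - int n
           - int (card {x. x < n \<and> deg M x = 1 \<and> f $ x = 0})
           + int (card {x. x < n \<and> deg M x = 1 \<and> f $ x \<noteq> 0 \<and>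
                          (\<forall>x'. adj M x x' \<longrightarrow> f $ x' = 0)})"
proof -
  note M = assms(1) and sym = assms(2) and k = assms(3,4) and gap = assms(5)
  define lam where "lam = eig M k"
  have f: "f \<in> carrier_vec n" and ev: "M *\<^sub>v f = lam \<cdot>\<^sub>v f"
    using assms(6) M unfolding eigenvector_def lam_def by auto
  define L where "L = {x. x < n \<and> deg M x = 1}"
  define Z where "Z = {x. x < n \<and> deg M x = 1 \<and> f $ x = 0}"
  define NL where "NL = {x. x < n \<and> deg M x = 1 \<and> f $ x \<noteq> 0}"
  define SA where "SA = {x. x < n \<and> deg M x = 1 \<and> f $ x \<noteq> 0 \<and> (\<forall>x'. adj M x x' \<longrightarrow> f $ x' = 0)}"
  define Sw where "Sw x \<longleftrightarrow> f $ x * sgn_edge M x (nb M x) * f $ (nb M x) > 0" for x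
  define SB where "SB = {x \<in> NL. x \<notin> SA \<and> \<not> Sw x}"
  define SC where "SC = {x \<in> NL. x \<notin> SA \<and> Sw x}"
  define P2 where "P2 = {x \<in> SC. nb M x \<in> SC \<and> nb M x < x}"
  define C' where "C' = SC - P2"
  define I where "I = SA \<union> C'"
  define T where "T = SA \<union> SB \<union> P2"
  have fin: "finite L" "finite Z" "finite NL" "finite SA" "finite SB" "finite SC" "finite P2" "finite C'"
    unfolding L_def Z_def NL_def SA_def SB_def SC_def P2_def C'_def by auto
  have NLsub: "SA \<subseteq> NL" "SB \<subseteq> NL" "SC \<subseteq> NL" unfolding SA_def SB_def SC_def NL_def by auto
  have leafNL: "deg M x = 1" "x < n" "f $ x \<noteq> 0" if "x \<in> NL" for x using that unfolding NL_def by auto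
  have nbSA: "f $ (nb M x) = 0" if "x \<in> SA" for x
    using that nb_leaf(1)[of M x] unfolding SA_def by auto
  have nbNSA: "f $ (nb M x) \<noteq> 0" if "x \<in> NL" "x \<notin> SA" for x
    using that nb_leaf(2)[of M x] unfolding SA_def NL_def by auto
  have nbnb: "nb M (nb M x) = x" if "deg M x = 1" "deg M (nb M x) = 1" for x
    using nb_leaf[OF that(1)] nb_leaf(2)[OF that(2)] adj_sym[OF M sym] by metis
  have cL: "card L = card NL + card Z"
  proof -
    have "L = NL \<union> Z" "NL \<inter> Z = {}" unfolding L_def NL_def Z_def by auto
    then show ?thesis using fin card_Un_disjoint by metis
  qed
  have cNL: "card NL = card SA + card SB + card P2 + card C'"
  proof -
    have e1: "NL = SA \<union> SB \<union> (P2 \<union> C')" unfolding SB_def SC_def C'_def P2_def using NLsub(1) by auto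
    have "card (P2 \<union> C') = card P2 + card C'"
      by (rule card_Un_disjoint) (use fin in \<open>auto simp: C'_def\<close>)
    moreover have "card (SA \<union> SB) = card SA + card SB"
      by (rule card_Un_disjoint) (use fin in \<open>auto simp: SB_def\<close>)
    moreover have "card (SA \<union> SB \<union> (P2 \<union> C')) = card (SA \<union> SB) + card (P2 \<union> C')"
      by (rule card_Un_disjoint) (use fin in \<open>auto simp: SB_def SC_def C'_def P2_def\<close>)
    ultimately show ?thesis unfolding e1 by simp
  qed
  have cI: "card I = card SA + card C'"
    unfolding I_def by (rule card_Un_disjoint) (use fin in \<open>auto simp: C'_def SC_def\<close>)
  have cT: "card T = card SA + card SB + card P2"
  proof -
    have "card (SA \<union> SB) = card SA + card SB"
      by (rule card_Un_disjoint) (use fin in \<open>auto simp: SB_def\<close>)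
    moreover have "card (SA \<union> SB \<union> P2) = card (SA \<union> SB) + card P2"
      by (rule card_Un_disjoint) (use fin in \<open>auto simp: SB_def SC_def P2_def\<close>)
    ultimately show ?thesis unfolding T_def by simp
  qed
  have Isub: "I \<subseteq> {0..<n}" unfolding I_def C'_def SC_def using NLsub leafNL by auto
  have diag: "\<forall>x\<in>I. M $$ (x,x) \<ge> eig M k"
  proof
    fix x assume x: "x \<in> I"
    have NLx: "x \<in> NL" using x NLsub unfolding I_def C'_def by auto
    note row = leaf_row[OF M f ev leafNL(1)[OF NLx]]
    show "M $$ (x,x) \<ge> eig M k"
    proof (cases "x \<in> SA")
      case True
      then show ?thesis using row nbSA[OF True] leafNL(3)[OF NLx] unfolding lam_def by simp
    next
      case False
      then have "x \<in> SC" using x unfolding I_def C'_def by auto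
      then have "Sw x" unfolding SC_def by auto
      have "adj M x (nb M x)" using nb_leaf(1)[OF leafNL(1)[OF NLx]] .
      then have "M $$ (x, nb M x) \<noteq> 0" unfolding adj_def by simp
      from SC_diag[OF row leafNL(3)[OF NLx] this \<open>Sw x\<close>[unfolded Sw_def]]
      show ?thesis unfolding lam_def by simp
    qed
  qed
  have off: "\<forall>x\<in>I. \<forall>y\<in>I. x \<noteq> y \<longrightarrow> M $$ (x,y) = 0"
  proof (intro ballI impI)
    fix x y assume x: "x \<in> I" and y: "y \<in> I" and xy: "x \<noteq> y"
    show "M $$ (x, y) = 0"
    proof (rule ccontr)
      assume "M $$ (x, y) \<noteq> 0"
      have NLx: "x \<in> NL" and NLy: "y \<in> NL" using x y NLsub unfolding I_def C'_def by auto
      have a: "adj M x y" using \<open>M $$ (x, y) \<noteq> 0\<close> xy leafNL(2)[OF NLx] leafNL(2)[OF NLy] M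
        unfolding adj_def by auto
      have ynb: "y = nb M x" using nb_leaf(2)[OF leafNL(1)[OF NLx] a] .
      have xnb: "x = nb M y" using nb_leaf(2)[OF leafNL(1)[OF NLy] adj_sym[OF M sym a]] .
      show False
      proof (cases "x \<in> SA \<or> y \<in> SA")
        case True
        then show ?thesis
        proof
          assume "x \<in> SA" then show False using nbSA[of x] ynb leafNL(3)[OF NLy] by simp
        next
          assume "y \<in> SA" then show False using nbSA[of y] xnb leafNL(3)[OF NLx] by simp
        qed
      next
        case False
        then have xC: "x \<in> C'" and yC: "y \<in> C'" using x y unfolding I_def by auto
        then have "x \<in> SC" "y \<in> SC" "x \<notin> P2" "y \<notin> P2" unfolding C'_def by auto
        then have sc: "x \<in> SC" "y \<in> SC" "x \<notin> P2" "y \<notin> P2" .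
        show False
        proof (cases "y < x")
          case True
          then have "x \<in> P2" unfolding P2_def using sc ynb[symmetric] by simp
          then show False using sc by simp
        next
          case False
          then have "x < y" using xy by simp
          then have "y \<in> P2" unfolding P2_def using sc xnb[symmetric] by simp
          then show False using sc by simp
        qed
      qed
    qed
  qed
  have bound: "card I + k \<le> n + 1" by (rule main_bound[OF M sym k gap Isub diag off])
  define rel where "rel = strong_rel M f"
  define g where "g x = rel `` {x}" for x
  have Tsub: "T \<subseteq> nonzero_set M f"
    unfolding T_def nonzero_set_def P2_def using NLsub leafNL M by auto
  have finNZ: "finite (nonzero_set M f)" unfolding nonzero_set_def by simp
  have finQ: "finite (nonzero_set M f // rel)" unfolding quotient_def using finNZ by simp
  have gT: "g ` T \<subseteq> nonzero_set M f // rel" unfolding g_def using Tsub by (auto intro: quotientI)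
  have refl: "x \<in> g x" if "x \<in> nonzero_set M f" for x
    using that unfolding g_def rel_def strong_rel_def by auto
  have injg: "inj_on g T"
  proof (rule inj_onI)
    fix x x' assume x: "x \<in> T" and x': "x' \<in> T" and eq: "g x = g x'"
    have "x' \<in> g x" using refl[of x'] x' Tsub eq by auto
    then have r: "(x, x') \<in> strong_rel M f" unfolding g_def rel_def by simp
    have NLx: "x \<in> NL" using x NLsub unfolding T_def P2_def by auto
    show "x = x'"
    proof (cases "x \<in> P2")
      case False
      then have "x \<in> SA \<or> x \<in> SB" using x unfolding T_def by auto
      then have "\<not> Sw x" using nbSA unfolding SB_def Sw_def by auto
      then show ?thesis using isolated_class[OF leafNL(1)[OF NLx] _ r] unfolding Sw_def by auto
    next
      case True
      define y where "y = nb M x"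
      have yC: "y \<in> SC" and yx: "y < x" using True unfolding P2_def y_def by auto
      have NLy: "y \<in> NL" using yC NLsub by auto
      have nby: "nb M y = x" using nbnb[OF leafNL(1)[OF NLx]] leafNL(1)[OF NLy] unfolding y_def by simp
      have "x' = x \<or> x' = y"
        using pair_class[OF leafNL(1)[OF NLx] leafNL(1)[OF NLy] y_def[symmetric] nby r] .
      moreover have "y \<notin> T" using yC yx nby unfolding T_def SB_def SC_def P2_def by auto
      ultimately show ?thesis using x' by auto
    qed
  qed
  have cS: "card T \<le> strong_nodal_domains M f"
    unfolding strong_nodal_domains_def rel_def[symmetric]
    using card_inj_on_le[OF injg gT finQ] .
  have e1: "card {x. x < n \<and> deg M x = 1} = card L" unfolding L_def ..
  have e2: "card {x. x < n \<and> deg M x = 1 \<and> f $ x = 0} = card Z" unfolding Z_def ..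
  have e3: "card {x. x < n \<and> deg M x = 1 \<and> f $ x \<noteq> 0 \<and> (\<forall>x'. adj M x x' \<longrightarrow> f $ x' = 0)} = card SA"
    unfolding SA_def ..
  show ?thesis unfolding e1 e2 e3 using cL cNL cI cT bound cS by linarith
qed

end
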